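(* Let $X=[0,1]^2$ with the order $(x_1,y_1)\prec(x_2,y_2)$ iff $x_1\le x_2$ and $y_1\le y_2$, let $\mu$ be the uniform distribution on $X$, and consider the threshold rule based on a nonincreasing sequence $\{c_i\}$ in $(0,1]$. Let $z=|S_n\cap\mathcal{X}_n|$ and let $\mathcal{E}'_n$ be the event that at least one sample in $R_n$ does not lie in $\mathcal{D}(S_n\cap\mathcal{X}_n)$. Then, conditioned on $z$, \[\Pr[\mathcal{E}'_n]\le\exp\left\{-\frac{z\,c_n}{\mu(\mathcal{X}_n)}\right\}\cdot E[|R_n|].\]
   Context: For $x\in X$ let $\mathcal{D}(x)=\{y: y\prec x\}$, $\mathcal{U}(x)=\{y: x\prec y\}$, and $\mathcal{D}(S)=\bigcup_{x\in S}\mathcal{D}(x)$. The threshold rule is $\mathcal{X}_0=X$, $\mathcal{X}_i=\{x\in X:\mu(\mathcal{U}(x))\le c_i\}$ for $i\ge1$. Samples $x_1,x_2,\dots$ are i.i.d. from $\mu$; sample $x_t$ is selected iff $x_t\in\mathcal{X}_j$, where $j$ is the number of samples selected among $x_1,\dots,x_{t-1}$. $T_n$ is the index of the $n$-th selected sample, $S_n$ the set of $n$ selected samples, and $R_n=\{x_1,\dots,x_{T_n}\}\setminus S_n$ the rejected samples. *)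

theory Defs
  imports "HOL-Probability.Probability"
begin

definition Xbox :: "(real \<times> real) set" where
  "Xbox = {0..1} \<times> {0..1}"

definition prec :: "real \<times> real \<Rightarrow> real \<times> real \<Rightarrow> bool" where
  "prec p q \<longleftrightarrow> fst p \<le> fst q \<and> snd p \<le> snd q"

definition mu :: "(real \<times> real) measure" where
  "mu = uniform_measure lborel Xbox"

definition Dn :: "real \<times> real \<Rightarrow> (real \<times> real) set" where
  "Dn x = {y \<in> Xbox. prec y x}"

definition Up :: "real \<times> real \<Rightarrow> (real \<times> real) set" where
  "Up x = {y \<in> Xbox. prec x y}"

definition DS :: "(real \<times> real) set \<Rightarrow> (real \<times> real) set" where
  "DS S = (\<Union>x\<in>S. Dn x)"

definition thr_set :: "(nat \<Rightarrow> real) \<Rightarrow> nat \<Rightarrow> (real \<times> real) set" where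
  "thr_set c i = (if i = 0 then Xbox else {x \<in> Xbox. measure mu (Up x) \<le> c i})"

text \<open>Samples are w 0, w 1, ... (w t is the paper's x_{t+1}).
  nsel c w t = number of samples selected among the first t samples.\<close>
fun nsel :: "(nat \<Rightarrow> real) \<Rightarrow> (nat \<Rightarrow> real \<times> real) \<Rightarrow> nat \<Rightarrow> nat" where
  "nsel c w 0 = 0"
| "nsel c w (Suc t) = nsel c w t + (if w t \<in> thr_set c (nsel c w t) then 1 else 0)"

definition selected :: "(nat \<Rightarrow> real) \<Rightarrow> (nat \<Rightarrow> real \<times> real) \<Rightarrow> nat \<Rightarrow> bool" where
  "selected c w t \<longleftrightarrow> w t \<in> thr_set c (nsel c w t)"

text \<open>T_n: the n-th selected sample is the paper's x_{T_n}, i.e. w (T_n - 1).\<close>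
definition Tn :: "(nat \<Rightarrow> real) \<Rightarrow> (nat \<Rightarrow> real \<times> real) \<Rightarrow> nat \<Rightarrow> nat" where
  "Tn c w n = (LEAST t. nsel c w t = n)"

definition Sset :: "(nat \<Rightarrow> real) \<Rightarrow> (nat \<Rightarrow> real \<times> real) \<Rightarrow> nat \<Rightarrow> (real \<times> real) set" where
  "Sset c w n = {w t | t. t < Tn c w n \<and> selected c w t}"

definition Rset :: "(nat \<Rightarrow> real) \<Rightarrow> (nat \<Rightarrow> real \<times> real) \<Rightarrow> nat \<Rightarrow> (real \<times> real) set" where
  "Rset c w n = w ` {..<Tn c w n} - Sset c w n"

definition sample_space :: "(nat \<Rightarrow> real \<times> real) measure" where
  "sample_space = PiM UNIV (\<lambda>_::nat. mu)"

end

theory Submission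
  imports Defs
begin

lemma Xbox_sets[measurable]: "Xbox \<in> sets borel"
  unfolding Xbox_def by (simp add: borel_Times)

lemma lborel_Xbox: "emeasure lborel Xbox = 1"
proof -
  have "emeasure (lborel \<Otimes>\<^sub>M lborel) ({0..1::real} \<times> {0..1::real}) = 1"
    by (subst sigma_finite_measure.emeasure_pair_measure_Times) (auto intro: lborel.sigma_finite_measure_axioms)
  then show ?thesis unfolding Xbox_def lborel_prod .
qed

lemma lborel_box:
  fixes a b a' b' :: real
  assumes "a \<le> b" "a' \<le> b'"
  shows "emeasure lborel ({a..b} \<times> {a'..b'}) = ennreal ((b-a)*(b'-a'))"
proof -
  have "emeasure (lborel \<Otimes>\<^sub>M lborel) ({a..b} \<times> {a'..b'}) = ennreal ((b-a)*(b'-a'))"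
    using assms by (subst sigma_finite_measure.emeasure_pair_measure_Times) (auto intro: lborel.sigma_finite_measure_axioms simp: ennreal_mult)
  then show ?thesis unfolding lborel_prod .
qed

lemma prob_mu: "prob_space mu"
  unfolding mu_def by (rule prob_space_uniform_measure) (auto simp: lborel_Xbox)

lemma sets_mu[simp, measurable_cong]: "sets mu = sets borel" and space_mu[simp]: "space mu = UNIV"
  unfolding mu_def by auto

lemma emeasure_mu: "A \<in> sets borel \<Longrightarrow> emeasure mu A = emeasure lborel (Xbox \<inter> A)"
  unfolding mu_def by (simp add: lborel_Xbox divide_ennreal_def)

lemma mu_box:
  fixes a b a' b' :: real
  assumes "0 \<le> a" "a \<le> b" "b \<le> 1" "0 \<le> a'" "a' \<le> b'" "b' \<le> 1"
  shows "emeasure mu ({a..b} \<times> {a'..b'}) = ennreal ((b-a)*(b'-a'))"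
proof -
  have "Xbox \<inter> ({a..b} \<times> {a'..b'}) = {a..b} \<times> {a'..b'}" using assms unfolding Xbox_def by auto
  moreover have "{a..b} \<times> {a'..b'} \<in> sets borel" by (simp add: borel_Times)
  ultimately show ?thesis using assms by (simp add: emeasure_mu lborel_box)
qed

lemma measure_mu_box:
  fixes a b a' b' :: real
  assumes "0 \<le> a" "a \<le> b" "b \<le> 1" "0 \<le> a'" "a' \<le> b'" "b' \<le> 1"
  shows "measure mu ({a..b} \<times> {a'..b'}) = (b-a)*(b'-a')"
  using mu_box[OF assms] assms unfolding measure_def by simp

lemma Up_eq: "x \<in> Xbox \<Longrightarrow> Up x = {fst x..1} \<times> {snd x..1}"
  unfolding Up_def Xbox_def prec_def by (cases x) auto

lemma measure_Up: "x \<in> Xbox \<Longrightarrow> measure mu (Up x) = (1 - fst x) * (1 - snd x)"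
  by (simp add: Up_eq measure_mu_box) (auto simp: Xbox_def measure_mu_box)

lemma thr_eq: "i \<noteq> 0 \<Longrightarrow> thr_set c i = {x\<in>Xbox. (1 - fst x) * (1 - snd x) \<le> c i}"
  unfolding thr_set_def by (auto simp: measure_Up)

lemma thr_sets[measurable]: "thr_set c i \<in> sets borel"
proof (cases "i = 0")
  case True then show ?thesis by (simp add: thr_set_def)
next
  case False
  have cl: "closed {x::real\<times>real. (1 - fst x) * (1 - snd x) \<le> c i}"
    by (intro closed_Collect_le continuous_intros)
  have "{x\<in>Xbox. (1 - fst x) * (1 - snd x) \<le> c i} = Xbox \<inter> {x. (1 - fst x) * (1 - snd x) \<le> c i}" by auto
  also have "\<dots> \<in> sets borel" using cl by (intro sets.Int Xbox_sets borel_closed)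
  finally show ?thesis using False by (simp add: thr_eq)
qed


locale thr =
  fixes c :: "nat \<Rightarrow> real" and n :: nat
  assumes c_pos: "\<forall>i\<ge>1. 0 < c i \<and> c i \<le> 1"
    and c_mono: "\<forall>i j. 1 \<le> i \<longrightarrow> i \<le> j \<longrightarrow> c j \<le> c i"
    and n1: "1 \<le> n"
begin

abbreviation X where "X i \<equiv> thr_set c i"

lemma X_sub_Xbox: "X i \<subseteq> Xbox"
  by (auto simp: thr_set_def)

lemma X_mono: "j \<le> i \<Longrightarrow> X i \<subseteq> X j"
proof -
  assume "j \<le> i"
  show ?thesis
  proof (cases "j = 0")
    case True then show ?thesis using X_sub_Xbox by (simp add: thr_set_def)
  next
    case False
    then have "c i \<le> c j" using c_mono \<open>j \<le> i\<close> by auto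
    then show ?thesis using False \<open>j \<le> i\<close> by (auto simp: thr_eq)
  qed
qed

lemma X_ge: "1 \<le> j \<Longrightarrow> {1 - c j..1} \<times> {0..1} \<subseteq> X j"
proof
  fix x :: "real \<times> real" assume j: "1 \<le> j" and x: "x \<in> {1 - c j..1} \<times> {0..1}"
  have "(1 - fst x) * (1 - snd x) \<le> c j * 1"
    using x c_pos j by (intro mult_mono) auto
  then show "x \<in> X j" using x j c_pos by (auto simp: thr_eq Xbox_def)
qed

lemma m_ge: "1 \<le> j \<Longrightarrow> c j \<le> measure mu (X j)"
proof -
  assume j: "1 \<le> j"
  interpret P: prob_space mu by (rule prob_mu)
  have "measure mu ({1 - c j..1} \<times> {0..1}) = c j"
    using c_pos j by (subst measure_mu_box) auto
  moreover have "measure mu ({1 - c j..1} \<times> {0..1}) \<le> measure mu (X j)"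
    using X_ge[OF j] by (intro P.finite_measure_mono) auto
  ultimately show ?thesis by simp
qed

lemma m_pos: "0 < measure mu (X j)"
proof (cases "j = 0")
  case True
  interpret P: prob_space mu by (rule prob_mu)
  have "measure mu Xbox = 1" unfolding measure_def using lborel_Xbox
    by (simp add: emeasure_mu)
  then show ?thesis using True by (simp add: thr_set_def)
next
  case False
  then have "1 \<le> j" by simp
  then show ?thesis using m_ge[of j] c_pos by force
qed

lemma key_geom:
  assumes r: "r \<in> Xbox" "r \<notin> X j" and j: "1 \<le> j" "j \<le> n"
  shows "emeasure mu {y \<in> X n. \<not> prec r y} \<le> ennreal (measure mu (X n) - c n)"
proof -
  interpret P: prob_space mu by (rule prob_mu)
  define a where "a = 1 - fst r"
  define b where "b = 1 - snd r"
  define cc where "cc = c n"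
  have cc: "0 < cc" "cc \<le> c j" using c_pos c_mono j n1 by (auto simp: cc_def)
  have ab: "0 \<le> a" "a \<le> 1" "0 \<le> b" "b \<le> 1" using r by (auto simp: a_def b_def Xbox_def)
  have "\<not> (a * b \<le> c j)" using r j by (auto simp: thr_eq a_def b_def)
  then have abc: "cc < a * b" using cc by auto
  have apos: "0 < a" using abc cc ab by (cases "a = 0") auto
  have cab: "cc / a < b" using abc apos by (simp add: divide_less_eq mult.commute)
  define R where "R = {fst r..1} \<times> {1 - cc/a..1}"
  have cpos: "0 \<le> cc / a" using apos cc by simp
  have "measure mu R = (1 - fst r) * (1 - (1 - cc/a))"
    unfolding R_def using ab cab cpos by (subst measure_mu_box) (auto simp: a_def b_def)
  then have mR: "measure mu R = cc" using apos by (simp add: a_def)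
  have RX: "R \<subseteq> X n"
  proof
    fix y assume y: "y \<in> R"
    have "(1 - fst y) * (1 - snd y) \<le> a * (cc / a)"
      using y ab cab cpos unfolding R_def a_def by (intro mult_mono) auto
    then have "(1 - fst y) * (1 - snd y) \<le> cc" using apos by simp
    moreover have "y \<in> Xbox" using y ab cab cpos unfolding R_def Xbox_def a_def by auto
    ultimately show "y \<in> X n" using n1 by (auto simp: thr_eq cc_def)
  qed
  have "{y \<in> X n. \<not> prec r y} \<subseteq> X n - R"
    unfolding R_def prec_def using ab cab cpos by (auto simp: b_def)
  then have "measure mu {y \<in> X n. \<not> prec r y} \<le> measure mu (X n - R)"
    by (intro P.finite_measure_mono) (auto simp: R_def borel_Times)
  also have "\<dots> = measure mu (X n) - measure mu R"
    using RX by (intro P.finite_measure_Diff) (auto simp: R_def borel_Times)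
  finally have "measure mu {y \<in> X n. \<not> prec r y} \<le> measure mu (X n) - c n"
    using mR by (simp add: cc_def)
  moreover have "{y \<in> X n. \<not> prec r y} \<in> sets mu"
  proof -
    have "{y \<in> X n. \<not> prec r y} = X n - {fst r..} \<times> {snd r..}"
      by (auto simp: prec_def)
    moreover have "{fst r..} \<times> {snd r..} \<in> sets borel" by (simp add: borel_Times)
    ultimately show ?thesis by simp
  qed
  ultimately show ?thesis by (simp add: P.emeasure_eq_measure ennreal_leI)
qed

end

lemma space_SS[simp]: "space sample_space = UNIV"
  unfolding sample_space_def by (simp add: space_PiM)

interpretation SSp: product_prob_space "\<lambda>_::nat. mu" UNIV
  using prob_mu unfolding product_prob_space_def product_sigma_finite_def
  by (auto simp: prob_space_imp_sigma_finite intro: product_prob_space_axioms.intro)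

lemma prob_SS: "prob_space sample_space"
  unfolding sample_space_def by (rule SSp.P.prob_space_axioms)

lemma local_PiM:
  assumes J: "finite J" and G: "G \<in> borel_measurable (PiM J (\<lambda>_. mu))"
    and loc: "\<And>w. G (restrict w J) = G w"
  shows "(\<integral>\<^sup>+w. G w \<partial>sample_space) = (\<integral>\<^sup>+x. G x \<partial>PiM J (\<lambda>_. mu))"
proof -
  have m: "(\<lambda>w. restrict w J) \<in> measurable (PiM UNIV (\<lambda>_. mu)) (PiM J (\<lambda>_. mu))"
    by (rule measurable_restrict_subset) auto
  have "(\<integral>\<^sup>+w. G w \<partial>sample_space) = (\<integral>\<^sup>+w. G (restrict w J) \<partial>PiM UNIV (\<lambda>_. mu))"
    unfolding sample_space_def using loc by simp
  also have "\<dots> = (\<integral>\<^sup>+x. G x \<partial>distr (PiM UNIV (\<lambda>_. mu)) (PiM J (\<lambda>_. mu)) (\<lambda>w. restrict w J))"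
    by (rule nn_integral_distr[symmetric, OF m]) (simp add: G)
  also have "\<dots> = (\<integral>\<^sup>+x. G x \<partial>PiM J (\<lambda>_. mu))"
    using J by (subst SSp.distr_PiM_restrict_finite) auto
  finally show ?thesis .
qed

lemma prod_ind_PiM:
  fixes I :: "nat set"
  assumes I: "finite I" and D: "\<And>t. t \<in> I \<Longrightarrow> D t \<in> sets borel"
  shows "(\<integral>\<^sup>+x. (\<Prod>t\<in>I. indicator (D t) (x t)) \<partial>PiM I (\<lambda>_. mu)) = (\<Prod>t\<in>I. emeasure mu (D t))"
proof -
  have "(\<integral>\<^sup>+x. (\<Prod>t\<in>I. indicator (D t) (x t)) \<partial>PiM I (\<lambda>_. mu)) = (\<Prod>t\<in>I. integral\<^sup>N mu (indicator (D t)))"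
    apply (rule SSp.product_nn_integral_prod[where f="\<lambda>t. indicator (D t)"])
    using I D by auto
  also have "\<dots> = (\<Prod>t\<in>I. emeasure mu (D t))"
    using D by (intro prod.cong refl nn_integral_indicator) auto
  finally show ?thesis .
qed

lemma prod_ind_SS:
  assumes D: "\<And>t. t < L \<Longrightarrow> D t \<in> sets borel"
  shows "(\<integral>\<^sup>+w. (\<Prod>t<L. indicator (D t) (w t)) \<partial>sample_space) = (\<Prod>t<L. emeasure mu (D t))"
proof -
  have "(\<integral>\<^sup>+w. (\<Prod>t<L. indicator (D t) (w t)) \<partial>sample_space)
      = (\<integral>\<^sup>+x. (\<Prod>t<L. indicator (D t) (x t)) \<partial>PiM {..<L} (\<lambda>_. mu))"
    using D by (intro local_PiM) auto
  also have "\<dots> = (\<Prod>t<L. emeasure mu (D t))"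
    using D by (intro prod_ind_PiM) auto
  finally show ?thesis .
qed

lemma local_insert:
  assumes J: "finite J" "t0 \<in> J" and G: "G \<in> borel_measurable (PiM J (\<lambda>_. mu))"
    and loc: "\<And>w. G (restrict w J) = G w"
  shows "(\<integral>\<^sup>+w. G w \<partial>sample_space) = (\<integral>\<^sup>+y. (\<integral>\<^sup>+x. G (x(t0 := y)) \<partial>PiM (J - {t0}) (\<lambda>_. mu)) \<partial>mu)"
proof -
  have JJ: "J = insert t0 (J - {t0})" using J by auto
  have "(\<integral>\<^sup>+w. G w \<partial>sample_space) = (\<integral>\<^sup>+x. G x \<partial>PiM J (\<lambda>_. mu))"
    by (rule local_PiM[OF J(1) G loc])
  also have "\<dots> = (\<integral>\<^sup>+x. G x \<partial>PiM (insert t0 (J - {t0})) (\<lambda>_. mu))"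
    using JJ by simp
  also have "\<dots> = (\<integral>\<^sup>+y. (\<integral>\<^sup>+x. G (x(t0 := y)) \<partial>PiM (J - {t0}) (\<lambda>_. mu)) \<partial>mu)"
    using J G JJ by (subst SSp.product_nn_integral_insert_rev) auto
  finally show ?thesis .
qed


lemma AE_mu_Xbox: "AE x in mu. x \<in> Xbox"
proof (rule AE_I')
  show "UNIV - Xbox \<in> null_sets mu"
    by (auto simp: null_sets_def emeasure_mu)
qed auto

lemma AE_Xbox: "AE w in sample_space. \<forall>t. w t \<in> Xbox"
  unfolding AE_all_countable sample_space_def
  by (auto intro: SSp.AE_component AE_mu_Xbox)

lemma mu_singleton: "emeasure mu {y} = 0"
proof -
  have "emeasure mu {y} = emeasure lborel (Xbox \<inter> {y})" by (simp add: emeasure_mu)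
  also have "\<dots> = 0" by (rule emeasure_lborel_countable) auto
  finally show ?thesis .
qed

lemma null_diag:
  assumes ab: "a \<noteq> b"
  shows "{w. w a = w b} \<in> null_sets sample_space"
proof -
  have S: "{w. w a = w b} \<in> sets sample_space"
  proof -
    have "{w \<in> space sample_space. w a = w b} \<in> sets sample_space"
      unfolding sample_space_def by measurable
    then show ?thesis by simp
  qed
  let ?G = "\<lambda>w::nat \<Rightarrow> real \<times> real. indicator {w. w a = w b} w :: ennreal"
  have "emeasure sample_space {w. w a = w b} = (\<integral>\<^sup>+w. ?G w \<partial>sample_space)"
    using S by simp
  also have "\<dots> = (\<integral>\<^sup>+y. (\<integral>\<^sup>+x. ?G (x(a := y)) \<partial>PiM ({a,b} - {a}) (\<lambda>_. mu)) \<partial>mu)"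
  proof (rule local_insert)
    have "{w \<in> space (PiM {a,b} (\<lambda>_. mu)). w a = w b} \<in> sets (PiM {a,b} (\<lambda>_. mu))"
      by measurable
    then show "?G \<in> borel_measurable (PiM {a,b} (\<lambda>_. mu))"
      using borel_measurable_indicator'[where f="\<lambda>x. x" and A="\<lambda>_. {w. w a = w b}" and M="PiM {a,b} (\<lambda>_. mu)"]
      by (simp add: space_PiM)
  qed (auto simp: indicator_def)
  also have "\<dots> = (\<integral>\<^sup>+y. 0 \<partial>mu)"
  proof (rule nn_integral_cong)
    fix y
    have eq: "{a,b} - {a} = {b}" using ab by auto
    have "(\<integral>\<^sup>+x. ?G (x(a := y)) \<partial>PiM ({a,b} - {a}) (\<lambda>_. mu))
        = (\<integral>\<^sup>+x. (\<Prod>t\<in>{b}. indicator ({y}) (x t)) \<partial>PiM {b} (\<lambda>_. mu))"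
      unfolding eq using ab by (intro nn_integral_cong) (auto simp: indicator_def)
    also have "\<dots> = 0" by (subst prod_ind_PiM) (auto simp: mu_singleton)
    finally show "(\<integral>\<^sup>+x. ?G (x(a := y)) \<partial>PiM ({a,b} - {a}) (\<lambda>_. mu)) = 0" .
  qed
  finally show ?thesis using S by auto
qed

lemma AE_inj: "AE w in sample_space. inj w"
proof -
  have "AE w in sample_space. \<forall>p::nat\<times>nat. fst p \<noteq> snd p \<longrightarrow> w (fst p) \<noteq> w (snd p)"
    unfolding AE_all_countable
  proof
    fix p :: "nat \<times> nat"
    show "AE w in sample_space. fst p \<noteq> snd p \<longrightarrow> w (fst p) \<noteq> w (snd p)"
    proof (cases "fst p = snd p")
      case False
      show ?thesis by (rule AE_I'[OF null_diag[OF False]]) auto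
    qed simp
  qed
  then show ?thesis by (rule AE_mp) (auto simp: inj_def)
qed


lemma mu_eqm: "emeasure mu A = ennreal (measure mu A)"
  by (rule SSp.M.emeasure_eq_measure)

lemma SS_eqm: "emeasure sample_space A = ennreal (measure sample_space A)"
  unfolding sample_space_def by (rule SSp.P.emeasure_eq_measure)

context thr begin

lemma nsel_Suc_le: "nsel c w (Suc t) \<le> nsel c w t + 1" by simp

lemma nsel_mono: "s \<le> t \<Longrightarrow> nsel c w s \<le> nsel c w t"
  by (induction t) (auto simp: le_Suc_eq)

lemma nsel_lt: assumes "\<forall>t. nsel c w t \<noteq> n" shows "nsel c w t < n"
proof (induction t)
  case 0 then show ?case using n1 by simp
next
  case (Suc t)
  have "nsel c w (Suc t) \<le> nsel c w t + 1" by simp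
  then show ?case using Suc assms[rule_format, of "Suc t"] by linarith
qed

lemma stuck:
  assumes "\<forall>t. nsel c w t \<noteq> n"
  shows "\<exists>j<n. \<exists>t1. \<forall>t\<ge>t1. w t \<notin> X j"
proof -
  have fin: "finite (range (nsel c w))"
    by (rule finite_subset[of _ "{..<n}"]) (auto intro: nsel_lt[OF assms])
  define j where "j = Max (range (nsel c w))"
  have "j \<in> range (nsel c w)" unfolding j_def by (rule Max_in[OF fin]) auto
  then obtain t1 where t1: "nsel c w t1 = j" by auto
  have le: "nsel c w t \<le> j" for t unfolding j_def by (rule Max_ge[OF fin]) auto
  have eq: "t \<ge> t1 \<Longrightarrow> nsel c w t = j" for t using nsel_mono[of t1 t w] le[of t] t1 by auto
  have "\<forall>t\<ge>t1. w t \<notin> X j"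
  proof (intro allI impI)
    fix t assume "t1 \<le> t"
    then have a: "nsel c w t = j" and b: "nsel c w (Suc t) = j" using eq by (blast, meson le_SucI)
    from b have "nsel c w t + (if w t \<in> X (nsel c w t) then 1 else 0) = j" by (simp only: nsel.simps)
    then show "w t \<notin> X j" using a by (auto split: if_splits)
  qed
  moreover have "j < n" using t1 nsel_lt[OF assms] by auto
  ultimately show ?thesis by auto
qed

lemma null_stuck: "{w. \<forall>t\<ge>t1. w t \<notin> X j} \<in> null_sets sample_space"
proof -
  let ?B = "{w. \<forall>t\<ge>t1. w t \<notin> X j}"
  have Bs: "?B \<in> sets sample_space"
  proof -
    have "?B = (\<Inter>t\<in>{t1..}. {w \<in> space (PiM UNIV (\<lambda>_::nat. mu)). w t \<in> UNIV - X j})"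
      by (auto simp: space_PiM)
    also have "\<dots> \<in> sets (PiM UNIV (\<lambda>_::nat. mu))"
      by (intro sets.countable_INT') (auto intro!: sets_Collect_single')
    finally show ?thesis unfolding sample_space_def .
  qed
  define q where "q = 1 - measure mu (X j)"
  have q: "0 \<le> q" "q < 1" using m_pos[of j] prob_space.prob_le_1[OF prob_mu, of "X j"] by (auto simp: q_def)
  have bnd: "measure sample_space ?B \<le> q ^ N" for N
  proof -
    have "emeasure sample_space ?B \<le> emeasure sample_space {w \<in> space sample_space. \<forall>t\<in>{t1..<t1+N}. w t \<in> UNIV - X j}"
    proof (rule emeasure_mono)
      have "{w \<in> space (PiM UNIV (\<lambda>_::nat. mu)). \<forall>t\<in>{t1..<t1+N}. w t \<in> UNIV - X j} \<in> sets (PiM UNIV (\<lambda>_::nat. mu))"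
        by measurable
      then show "{w \<in> space sample_space. \<forall>t\<in>{t1..<t1+N}. w t \<in> UNIV - X j} \<in> sets sample_space"
        by (simp add: sample_space_def)
    qed (auto simp: space_PiM)
    also have "\<dots> = (\<Prod>t\<in>{t1..<t1+N}. emeasure mu (UNIV - X j))"
      unfolding sample_space_def by (rule SSp.emeasure_PiM_Collect) auto
    also have "\<dots> = ennreal (q ^ N)"
      using SSp.M.prob_compl[of "X j"]
      by (simp add: mu_eqm q_def prod_ennreal[symmetric] ennreal_power)
    finally show ?thesis using SS_eqm q
      by (simp add: ennreal_le_iff)
  qed
  have "(\<lambda>N. q ^ N) \<longlonglongrightarrow> 0" using q by (intro LIMSEQ_power_zero) auto
  then have "measure sample_space ?B \<le> 0"
    by (rule LIMSEQ_le_const) (use bnd in auto)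
  then have "emeasure sample_space ?B = 0"
    using SS_eqm measure_nonneg[of sample_space ?B]
    by (simp add: )
  then show ?thesis using Bs by auto
qed

lemma AE_reach: "AE w in sample_space. \<exists>t. nsel c w t = n"
proof (rule AE_I')
  show "(\<Union>j. \<Union>t1. {w. \<forall>t\<ge>t1. w t \<notin> X j}) \<in> null_sets sample_space"
    by (rule null_sets_UN, rule null_sets_UN, rule null_stuck)
  show "{w \<in> space sample_space. \<not> (\<exists>t. nsel c w t = n)} \<subseteq> (\<Union>j. \<Union>t1. {w. \<forall>t\<ge>t1. w t \<notin> X j})"
  proof
    fix w assume "w \<in> {w \<in> space sample_space. \<not> (\<exists>t. nsel c w t = n)}"
    then have "\<forall>t. nsel c w t \<noteq> n" by auto
    from stuck[OF this] obtain j t1 where "\<forall>t\<ge>t1. w t \<notin> X j" by auto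
    then show "w \<in> (\<Union>j. \<Union>t1. {w. \<forall>t\<ge>t1. w t \<notin> X j})" by blast
  qed
qed

end

definition cnt :: "bool list \<Rightarrow> nat" where "cnt xs = length (filter id xs)"
definition ph :: "bool list \<Rightarrow> nat \<Rightarrow> nat" where "ph b t = cnt (take t b)"
definition Sel :: "bool list \<Rightarrow> nat set" where "Sel b = {t. t < length b \<and> b ! t}"
definition Rej :: "bool list \<Rightarrow> nat set" where "Rej b = {t. t < length b \<and> \<not> b ! t}"

lemma cnt_append[simp]: "cnt (xs @ ys) = cnt xs + cnt ys" by (simp add: cnt_def)
lemma cnt_take_drop: "cnt (take k ys) + cnt (drop k ys) = cnt ys"
  by (metis append_take_drop_id cnt_append)
lemma cnt_take_le: "cnt (take k ys) \<le> cnt ys" using cnt_take_drop[of k ys] by linarith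

lemma ph_Suc: "t < length b \<Longrightarrow> ph b (Suc t) = ph b t + (if b ! t then 1 else 0)"
  by (simp add: ph_def take_Suc_conv_app_nth cnt_def)

lemma ph_mono: "s \<le> s' \<Longrightarrow> ph b s \<le> ph b s'"
proof -
  assume "s \<le> s'"
  then have "take s b = take s (take s' b)" by (simp add: min_def)
  then show ?thesis unfolding ph_def using cnt_take_le[of s "take s' b"] by simp
qed

lemma finite_Sel[simp]: "finite (Sel b)" and finite_Rej[simp]: "finite (Rej b)"
  by (auto simp: Sel_def Rej_def)

lemma card_Sel: "card (Sel b) = cnt b"
  by (simp add: Sel_def cnt_def length_filter_conv_card)

context thr begin

definition Cset :: "bool list \<Rightarrow> nat \<Rightarrow> (real \<times> real) set" where
  "Cset b t = (if b ! t then X (ph b t) else UNIV - X (ph b t))"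

definition Eb :: "bool list \<Rightarrow> (nat \<Rightarrow> real \<times> real) set" where
  "Eb b = {w. \<forall>t<length b. w t \<in> Cset b t}"

definition valid :: "bool list \<Rightarrow> bool" where
  "valid b \<longleftrightarrow> cnt b = n \<and> b \<noteq> [] \<and> last b"

lemma Cset_sets[measurable]: "Cset b t \<in> sets borel"
  by (auto simp: Cset_def)

lemma nsel_Eb: "w \<in> Eb b \<Longrightarrow> t \<le> length b \<Longrightarrow> nsel c w t = ph b t"
proof (induction t)
  case 0 then show ?case by (simp add: ph_def cnt_def)
next
  case (Suc t)
  then have t: "t < length b" by simp
  have IH: "nsel c w t = ph b t" using Suc by simp
  have "w t \<in> Cset b t" using Suc.prems t by (auto simp: Eb_def)
  then have "(w t \<in> X (ph b t)) = b ! t" by (auto simp: Cset_def split: if_splits)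
  then show ?case using IH ph_Suc[OF t] by simp
qed

lemma ph_lt: assumes "valid b" "t < length b" shows "ph b t < n"
proof -
  have "drop t b \<noteq> []" using assms by simp
  moreover have "last (drop t b) = last b" using assms by simp
  ultimately have "True \<in> set (drop t b)" using assms(1) unfolding valid_def
    by (metis last_in_set)
  then have "True \<in> set (filter id (drop t b))" by simp
  then have "cnt (drop t b) \<ge> 1" unfolding cnt_def
    by (metis One_nat_def Suc_leI length_pos_if_in_set)
  then show ?thesis using cnt_take_drop[of t b] assms(1) unfolding ph_def valid_def by linarith
qed

lemma ph_len: "ph b (length b) = cnt b" by (simp add: ph_def)

lemma Tn_Eb: assumes v: "valid b" and w: "w \<in> Eb b" shows "Tn c w n = length b"
  unfolding Tn_def
proof (rule Least_equality)
  show "nsel c w (length b) = n" using nsel_Eb[OF w] v ph_len by (simp add: valid_def)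
  fix t assume "nsel c w t = n"
  show "length b \<le> t"
  proof (rule ccontr)
    assume "\<not> length b \<le> t"
    then have "t < length b" by simp
    have "ph b t < n" using ph_lt[OF v \<open>t < length b\<close>] .
    then show False using nsel_Eb[OF w, of t] \<open>t < length b\<close> \<open>nsel c w t = n\<close> by simp
  qed
qed

lemma sel_Eb: "w \<in> Eb b \<Longrightarrow> t < length b \<Longrightarrow> selected c w t = b ! t"
  using nsel_Eb[of w b t] by (auto simp: selected_def Eb_def Cset_def split: if_splits)

lemma Sset_Eb: assumes "valid b" "w \<in> Eb b" shows "Sset c w n = w ` Sel b"
  using sel_Eb[OF assms(2)] Tn_Eb[OF assms] by (auto simp: Sset_def Sel_def)

lemma Rset_Eb: assumes "valid b" "w \<in> Eb b" "inj w" shows "Rset c w n = w ` Rej b"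
proof -
  have "Rset c w n = w ` {..<length b} - w ` Sel b"
    using Sset_Eb[OF assms(1,2)] Tn_Eb[OF assms(1,2)] by (simp add: Rset_def)
  also have "\<dots> = w ` ({..<length b} - Sel b)"
    using assms(3) by (simp add: image_set_diff)
  also have "{..<length b} - Sel b = Rej b" by (auto simp: Sel_def Rej_def)
  finally show ?thesis .
qed

lemma reach_pat:
  assumes "nsel c w t0 = n"
  shows "\<exists>b. valid b \<and> w \<in> Eb b"
proof -
  define T where "T = Tn c w n"
  have nT: "nsel c w T = n" unfolding T_def Tn_def by (rule LeastI[of _ t0]) (rule assms)
  have lt: "t < T \<Longrightarrow> nsel c w t \<noteq> n" for t unfolding T_def Tn_def by (rule not_less_Least)
  define b where "b = map (\<lambda>t. selected c w t) [0..<T]"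
  have lb: "length b = T" by (simp add: b_def)
  have bt: "t < T \<Longrightarrow> b ! t = selected c w t" for t by (simp add: b_def)
  have ns: "t \<le> T \<Longrightarrow> nsel c w t = ph b t" for t
  proof (induction t)
    case 0 then show ?case by (simp add: ph_def cnt_def)
  next
    case (Suc t)
    then have t: "t < length b" using lb by simp
    then show ?case using Suc ph_Suc[OF t] bt[of t] lb by (simp add: selected_def)
  qed
  have "w \<in> Eb b"
    unfolding Eb_def Cset_def using ns bt lb by (auto simp: selected_def)
  moreover have T0: "T \<noteq> 0"
  proof
    assume "T = 0" then show False using nT n1 by simp
  qed
  have "cnt b = n" using ns[of T] nT lb ph_len[of b] by simp
  moreover have "b \<noteq> []" using T0 lb by auto
  moreover have "last b"
  proof -
    have "last b = b ! (T - 1)" using T0 lb by (metis last_conv_nth list.size(3))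
    also have "\<dots> = selected c w (T - 1)" using T0 by (simp add: bt)
    finally have lb': "last b = selected c w (T - 1)" .
    have "nsel c w T = nsel c w (T - 1) + (if selected c w (T - 1) then 1 else 0)"
      using T0 by (cases T) (auto simp: selected_def)
    moreover have "nsel c w (T - 1) \<noteq> n" using lt T0 by simp
    ultimately show ?thesis using nT lb' by (auto split: if_splits)
  qed
  ultimately show ?thesis by (auto simp: valid_def)
qed

lemma pat_unique:
  assumes "valid b" "valid b'" "w \<in> Eb b" "w \<in> Eb b'" shows "b = b'"
proof (rule nth_equalityI)
  show l: "length b = length b'" using Tn_Eb assms by metis
  fix i assume "i < length b"
  then show "b ! i = b' ! i" using sel_Eb[OF assms(3)] sel_Eb[OF assms(4)] l by metis
qed

lemma ph_bij: assumes v: "valid b" shows "bij_betw (ph b) (Sel b) {..<n}"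
proof -
  have inj: "inj_on (ph b) (Sel b)"
  proof (rule linorder_inj_onI)
    fix s s' assume "s < s'" "s \<in> Sel b" "s' \<in> Sel b"
    then have "ph b (Suc s) \<le> ph b s'" "ph b (Suc s) = ph b s + 1"
      using ph_Suc[of s b] ph_mono[of "Suc s" s' b] by (auto simp: Sel_def)
    then show "ph b s \<noteq> ph b s'" by simp
  qed auto
  have sub: "ph b ` Sel b \<subseteq> {..<n}" using ph_lt[OF v] by (auto simp: Sel_def)
  have "card (ph b ` Sel b) = card {..<n}"
    using card_image[OF inj] card_Sel v by (simp add: valid_def)
  then have "ph b ` Sel b = {..<n}" using sub by (intro card_subset_eq) auto
  then show ?thesis using inj by (simp add: bij_betw_def)
qed

end

context thr begin

definition zb :: "bool list \<Rightarrow> (nat \<Rightarrow> real \<times> real) \<Rightarrow> nat" where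
  "zb b w = card {s \<in> Sel b. w s \<in> X n}"

definition CA :: "bool list \<Rightarrow> nat set \<Rightarrow> nat \<Rightarrow> (real \<times> real) set" where
  "CA b A t = (if t \<in> A then X n else if t \<in> Sel b then X (ph b t) - X n else Cset b t)"

definition subsK :: "bool list \<Rightarrow> nat \<Rightarrow> nat set set" where
  "subsK b k = {A. A \<subseteq> Sel b \<and> card A = k}"

definition FA :: "bool list \<Rightarrow> nat set \<Rightarrow> ennreal" where
  "FA b A = (\<Prod>t<length b. emeasure mu (CA b A t))"

lemma CA_sets[measurable]: "CA b A t \<in> sets borel"
  by (auto simp: CA_def)

lemma finite_subsK[simp]: "finite (subsK b k)"
  by (rule finite_subset[of _ "Pow (Sel b)"]) (auto simp: subsK_def)

lemma Xn_sub: "valid b \<Longrightarrow> s \<in> Sel b \<Longrightarrow> X n \<subseteq> X (ph b s)"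
  using ph_lt[of b s] by (intro X_mono) (auto simp: Sel_def)

lemma CA_char:
  assumes v: "valid b" and A: "A \<subseteq> Sel b"
  shows "(\<forall>t<length b. w t \<in> CA b A t) \<longleftrightarrow> w \<in> Eb b \<and> A = {s \<in> Sel b. w s \<in> X n}"
proof
  assume H: "\<forall>t<length b. w t \<in> CA b A t"
  have "\<forall>t<length b. w t \<in> Cset b t"
  proof (intro allI impI)
    fix t assume t: "t < length b"
    show "w t \<in> Cset b t"
    proof (cases "t \<in> Sel b")
      case True
      then have "b ! t" by (simp add: Sel_def)
      then show ?thesis using H t True Xn_sub[OF v True] by (auto simp: CA_def Cset_def split: if_splits)
    next
      case False
      then have "t \<notin> A" using A by auto
      then show ?thesis using H t False by (auto simp: CA_def)
    qed
  qed
  then have "w \<in> Eb b" by (simp add: Eb_def)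
  moreover have "A = {s \<in> Sel b. w s \<in> X n}"
  proof (intro equalityI subsetI)
    fix s assume s: "s \<in> A"
    then have "s \<in> Sel b" using A by auto
    then have "s < length b" by (simp add: Sel_def)
    then have "w s \<in> CA b A s" using H by simp
    then show "s \<in> {s \<in> Sel b. w s \<in> X n}" using s \<open>s \<in> Sel b\<close> by (simp add: CA_def)
  next
    fix s assume s: "s \<in> {s \<in> Sel b. w s \<in> X n}"
    then have "s < length b" by (simp add: Sel_def)
    then have "w s \<in> CA b A s" using H by simp
    then show "s \<in> A" using s by (auto simp: CA_def split: if_splits)
  qed
  ultimately show "w \<in> Eb b \<and> A = {s \<in> Sel b. w s \<in> X n}" by simp
next
  assume H: "w \<in> Eb b \<and> A = {s \<in> Sel b. w s \<in> X n}"
  show "\<forall>t<length b. w t \<in> CA b A t"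
  proof (intro allI impI)
    fix t assume t: "t < length b"
    have "w t \<in> Cset b t" using H t by (auto simp: Eb_def)
    then show "w t \<in> CA b A t" using H t by (auto simp: CA_def Cset_def Sel_def)
  qed
qed

lemma prod_ind_iff: fixes L :: nat shows "(\<Prod>t<L. indicator (D t) (w t) :: ennreal) = (if \<forall>t<L. w t \<in> D t then 1 else 0)"
  by (induction L) (auto simp: indicator_def lessThan_Suc less_Suc_eq)

lemma sum_CA:
  assumes v: "valid b"
  shows "(\<Sum>A\<in>subsK b k. \<Prod>t<length b. indicator (CA b A t) (w t) :: ennreal)
       = (if w \<in> Eb b \<and> zb b w = k then 1 else 0)"
proof -
  define A0 where "A0 = {s \<in> Sel b. w s \<in> X n}"
  have "(\<Sum>A\<in>subsK b k. \<Prod>t<length b. indicator (CA b A t) (w t) :: ennreal)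
      = (\<Sum>A\<in>subsK b k. if A = A0 \<and> w \<in> Eb b then 1 else 0)"
    by (intro sum.cong refl) (auto simp: prod_ind_iff CA_char[OF v] subsK_def A0_def)
  also have "\<dots> = (if w \<in> Eb b \<and> A0 \<in> subsK b k then 1 else 0)"
    by (cases "w \<in> Eb b") (auto simp: sum.delta')
  also have "\<dots> = (if w \<in> Eb b \<and> zb b w = k then 1 else 0)"
    by (auto simp: subsK_def A0_def zb_def)
  finally show ?thesis .
qed

lemma meas_prod_ind:
  fixes L :: nat
  assumes "\<And>t. D t \<in> sets borel"
  shows "(\<lambda>w. \<Prod>t<L. indicator (D t) (w t) :: ennreal) \<in> borel_measurable sample_space"
  unfolding sample_space_def using assms by (intro borel_measurable_prod_ennreal) auto

lemma int_Eb: "(\<integral>\<^sup>+w. indicator (Eb b) w \<partial>sample_space) = (\<Prod>t<length b. emeasure mu (Cset b t))"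
proof -
  have "(\<integral>\<^sup>+w. indicator (Eb b) w \<partial>sample_space) = (\<integral>\<^sup>+w. (\<Prod>t<length b. indicator (Cset b t) (w t)) \<partial>sample_space)"
    by (intro nn_integral_cong) (auto simp: prod_ind_iff Eb_def indicator_def)
  also have "\<dots> = (\<Prod>t<length b. emeasure mu (Cset b t))"
    by (rule prod_ind_SS) simp
  finally show ?thesis .
qed

lemma int_Ebk:
  assumes v: "valid b"
  shows "(\<integral>\<^sup>+w. (if w \<in> Eb b \<and> zb b w = k then 1 else 0) \<partial>sample_space) = (\<Sum>A\<in>subsK b k. FA b A)"
proof -
  have "(\<integral>\<^sup>+w. (if w \<in> Eb b \<and> zb b w = k then 1 else 0) \<partial>sample_space)
      = (\<integral>\<^sup>+w. (\<Sum>A\<in>subsK b k. \<Prod>t<length b. indicator (CA b A t) (w t)) \<partial>sample_space)"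
    by (intro nn_integral_cong) (simp add: sum_CA[OF v])
  also have "\<dots> = (\<Sum>A\<in>subsK b k. \<integral>\<^sup>+w. (\<Prod>t<length b. indicator (CA b A t) (w t)) \<partial>sample_space)"
    by (rule nn_integral_sum) (rule meas_prod_ind, simp)
  also have "\<dots> = (\<Sum>A\<in>subsK b k. FA b A)"
    by (intro sum.cong refl) (simp add: prod_ind_SS FA_def)
  finally show ?thesis .
qed

end

lemma fst_borel[measurable]: "(fst :: real \<times> real \<Rightarrow> real) \<in> borel_measurable borel"
  by (rule borel_measurable_continuous_onI) (intro continuous_intros)

lemma snd_borel[measurable]: "(snd :: real \<times> real \<Rightarrow> real) \<in> borel_measurable borel"
  by (rule borel_measurable_continuous_onI) (intro continuous_intros)

lemma fst_mu[measurable]: "(fst :: real \<times> real \<Rightarrow> real) \<in> borel_measurable mu"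
  using fst_borel by (subst measurable_cong_sets[OF sets_mu refl])

lemma snd_mu[measurable]: "(snd :: real \<times> real \<Rightarrow> real) \<in> borel_measurable mu"
  using snd_borel by (subst measurable_cong_sets[OF sets_mu refl])

lemma comp_fst_meas: "t \<in> I \<Longrightarrow> (\<lambda>x. fst (x t)) \<in> borel_measurable (PiM I (\<lambda>_. mu))"
  using measurable_compose[OF measurable_component_singleton[of t I "\<lambda>_. mu"] fst_mu] by simp

lemma comp_snd_meas: "t \<in> I \<Longrightarrow> (\<lambda>x. snd (x t)) \<in> borel_measurable (PiM I (\<lambda>_. mu))"
  using measurable_compose[OF measurable_component_singleton[of t I "\<lambda>_. mu"] snd_mu] by simp

context thr begin

definition CB :: "bool list \<Rightarrow> nat set \<Rightarrow> real \<times> real \<Rightarrow> nat \<Rightarrow> (real \<times> real) set" where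
  "CB b A r t = (if t \<in> A then {y \<in> X n. \<not> prec r y} else CA b A t)"

definition ndom :: "bool list \<Rightarrow> nat \<Rightarrow> (nat \<Rightarrow> real \<times> real) \<Rightarrow> bool" where
  "ndom b t0 w \<longleftrightarrow> (\<forall>s\<in>Sel b. w s \<in> X n \<longrightarrow> \<not> prec (w t0) (w s))"

lemma notprec_sets[measurable]: "{y \<in> X n. \<not> prec r y} \<in> sets borel"
proof -
  have "{y \<in> X n. \<not> prec r y} = X n - {fst r..} \<times> {snd r..}"
    by (auto simp: prec_def)
  moreover have "{fst r..} \<times> {snd r..} \<in> sets borel" by (simp add: borel_Times)
  ultimately show ?thesis by simp
qed

lemma CB_sets[measurable]: "CB b A r t \<in> sets borel"
  by (auto simp: CB_def)

lemma sum_CB: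
  assumes v: "valid b" and t0: "t0 \<in> Rej b"
  shows "(\<Sum>A\<in>subsK b k. \<Prod>t<length b. indicator (CB b A (w t0) t) (w t) :: ennreal)
       = (if w \<in> Eb b \<and> zb b w = k \<and> ndom b t0 w then 1 else 0)"
proof -
  define A0 where "A0 = {s \<in> Sel b. w s \<in> X n}"
  have ch: "(\<forall>t<length b. w t \<in> CB b A (w t0) t) \<longleftrightarrow> w \<in> Eb b \<and> A = A0 \<and> ndom b t0 w"
    if A: "A \<subseteq> Sel b" for A
  proof -
    have AL: "A \<subseteq> {..<length b}" using A by (auto simp: Sel_def)
    have "(\<forall>t<length b. w t \<in> CB b A (w t0) t) \<longleftrightarrow>
          (\<forall>t<length b. w t \<in> CA b A t) \<and> (\<forall>s\<in>A. \<not> prec (w t0) (w s))"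
      using AL by (auto simp: CB_def CA_def)
    also have "\<dots> \<longleftrightarrow> w \<in> Eb b \<and> A = A0 \<and> (\<forall>s\<in>A. \<not> prec (w t0) (w s))"
      using CA_char[OF v A] by (simp add: A0_def)
    also have "\<dots> \<longleftrightarrow> w \<in> Eb b \<and> A = A0 \<and> ndom b t0 w"
      by (auto simp: A0_def ndom_def)
    finally show ?thesis .
  qed
  have "(\<Sum>A\<in>subsK b k. \<Prod>t<length b. indicator (CB b A (w t0) t) (w t) :: ennreal)
      = (\<Sum>A\<in>subsK b k. if A = A0 \<and> w \<in> Eb b \<and> ndom b t0 w then 1 else 0)"
    by (intro sum.cong refl) (auto simp: prod_ind_iff ch subsK_def)
  also have "\<dots> = (if w \<in> Eb b \<and> ndom b t0 w \<and> A0 \<in> subsK b k then 1 else 0)"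
    by (cases "w \<in> Eb b \<and> ndom b t0 w") (auto simp: sum.delta')
  also have "\<dots> = (if w \<in> Eb b \<and> zb b w = k \<and> ndom b t0 w then 1 else 0)"
    by (auto simp: subsK_def A0_def zb_def)
  finally show ?thesis .
qed

lemma meas_CB:
  fixes L :: nat
  assumes "{..<L} \<subseteq> I" "t0 \<in> I"
  shows "(\<lambda>w. \<Prod>t<L. indicator (CB b A (w t0) t) (w t) :: ennreal) \<in> borel_measurable (PiM I (\<lambda>_. mu))"
proof (intro borel_measurable_prod_ennreal)
  fix t assume t: "t \<in> {..<L}"
  then have tI: "t \<in> I" using assms by auto
  show "(\<lambda>w. indicator (CB b A (w t0) t) (w t) :: ennreal) \<in> borel_measurable (PiM I (\<lambda>_. mu))"
  proof (cases "t \<in> A")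
    case True
    have S: "{w \<in> space (PiM I (\<lambda>_. mu)). w t \<in> X n \<and> \<not> (fst (w t0) \<le> fst (w t) \<and> snd (w t0) \<le> snd (w t))}
       \<in> sets (PiM I (\<lambda>_. mu))"
    proof -
      let ?M = "PiM I (\<lambda>_. mu)"
      have a: "{w \<in> space ?M. w t \<in> X n} \<in> sets ?M" using tI by measurable
      have b: "{w \<in> space ?M. fst (w t0) \<le> fst (w t)} \<in> sets ?M"
        by (rule borel_measurable_le[OF comp_fst_meas[OF assms(2)] comp_fst_meas[OF tI]])
      have c: "{w \<in> space ?M. snd (w t0) \<le> snd (w t)} \<in> sets ?M"
        by (rule borel_measurable_le[OF comp_snd_meas[OF assms(2)] comp_snd_meas[OF tI]])
      have "{w \<in> space ?M. w t \<in> X n \<and> \<not> (fst (w t0) \<le> fst (w t) \<and> snd (w t0) \<le> snd (w t))}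
          = {w \<in> space ?M. w t \<in> X n} - ({w \<in> space ?M. fst (w t0) \<le> fst (w t)} \<inter> {w \<in> space ?M. snd (w t0) \<le> snd (w t)})"
        by auto
      also have "\<dots> \<in> sets ?M" using a b c by auto
      finally show ?thesis .
    qed
    have "(\<lambda>w. indicator (CB b A (w t0) t) (w t) :: ennreal)
        = (\<lambda>w. indicator {w. w t \<in> X n \<and> \<not> (fst (w t0) \<le> fst (w t) \<and> snd (w t0) \<le> snd (w t))} w)"
      using True by (auto simp: CB_def prec_def indicator_def)
    moreover have "(\<lambda>w. indicator {w. w t \<in> X n \<and> \<not> (fst (w t0) \<le> fst (w t) \<and> snd (w t0) \<le> snd (w t))} w :: ennreal)
        \<in> borel_measurable (PiM I (\<lambda>_. mu))"
      using borel_measurable_indicator'[where f="\<lambda>x. x" and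
          A="\<lambda>_. {w. w t \<in> X n \<and> \<not> (fst (w t0) \<le> fst (w t) \<and> snd (w t0) \<le> snd (w t))}" and M="PiM I (\<lambda>_. mu)"]
        S by simp
    ultimately show ?thesis by simp
  next
    case False
    then have "(\<lambda>w. indicator (CB b A (w t0) t) (w t) :: ennreal) = (\<lambda>w. indicator (CA b A t) (w t))"
      by (simp add: CB_def)
    moreover have "(\<lambda>w. indicator (CA b A t) (w t) :: ennreal) \<in> borel_measurable (PiM I (\<lambda>_. mu))"
      using tI by measurable
    ultimately show ?thesis by simp
  qed
qed

end

context thr begin

lemma bound_A:
  assumes v: "valid b" and t0: "t0 \<in> Rej b" and A: "A \<in> subsK b k"
  shows "(\<integral>\<^sup>+w. (\<Prod>t<length b. indicator (CB b A (w t0) t) (w t)) \<partial>sample_space)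
     \<le> ennreal (1 - c n / measure mu (X n)) ^ k * FA b A"
proof -
  define L where "L = length b"
  define J where "J = {..<L}"
  define I' where "I' = J - {t0}"
  define m where "m = measure mu (X n)"
  define q where "q = 1 - c n / m"
  let ?G = "\<lambda>w. (\<Prod>t<L. indicator (CB b A (w t0) t) (w t)) :: ennreal"
  have t0L: "t0 < L" and t0S: "t0 \<notin> Sel b" and nb: "\<not> b ! t0" using t0 by (auto simp: Rej_def Sel_def L_def)
  have AS: "A \<subseteq> Sel b" and cA: "card A = k" using A by (auto simp: subsK_def)
  have t0A: "t0 \<notin> A" using AS t0S by auto
  have AI: "A \<subseteq> I'" using AS t0A by (auto simp: I'_def J_def Sel_def L_def)
  have t0J: "t0 \<in> J" using t0L by (simp add: J_def)
  have fI: "finite I'" by (simp add: I'_def J_def)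
  have mpos: "0 < m" using m_pos by (simp add: m_def)
  have cm: "c n \<le> m" using m_ge[of n] n1 by (simp add: m_def)
  have q0: "0 \<le> q" using cm mpos by (simp add: q_def field_simps)
  have qm: "q * m = m - c n" using mpos by (simp add: q_def field_simps)
  have CB0: "CB b A y t0 = Cset b t0" for y using t0A t0S by (simp add: CB_def CA_def)
  have CA0: "CA b A t0 = Cset b t0" using t0A t0S by (simp add: CA_def)
  have s1: "(\<integral>\<^sup>+w. ?G w \<partial>sample_space) = (\<integral>\<^sup>+y. (\<integral>\<^sup>+x. ?G (x(t0 := y)) \<partial>PiM I' (\<lambda>_. mu)) \<partial>mu)"
    unfolding I'_def
  proof (rule local_insert)
    show "finite J" by (simp add: J_def)
    show "t0 \<in> J" by (rule t0J)
    show "?G \<in> borel_measurable (PiM J (\<lambda>_. mu))" using t0J by (intro meas_CB) (auto simp: J_def)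
    fix w show "?G (restrict w J) = ?G w" using t0J by (intro prod.cong) (auto simp: J_def)
  qed
  have s2: "(\<integral>\<^sup>+x. ?G (x(t0 := y)) \<partial>PiM I' (\<lambda>_. mu))
      = indicator (Cset b t0) y * (\<Prod>t\<in>I'. emeasure mu (CB b A y t))" for y
  proof -
    have "?G (x(t0 := y)) = indicator (Cset b t0) y * (\<Prod>t\<in>I'. indicator (CB b A y t) (x t))" for x
    proof -
      have "?G (x(t0 := y)) = (\<Prod>t\<in>J. indicator (CB b A y t) ((x(t0 := y)) t))"
        by (simp add: J_def)
      also have "\<dots> = indicator (CB b A y t0) y * (\<Prod>t\<in>I'. indicator (CB b A y t) ((x(t0 := y)) t))"
        using t0J by (subst prod.remove[of J t0]) (auto simp: J_def I'_def)
      also have "(\<Prod>t\<in>I'. indicator (CB b A y t) ((x(t0 := y)) t)) = (\<Prod>t\<in>I'. indicator (CB b A y t) (x t))"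
        by (intro prod.cong) (auto simp: I'_def)
      finally show ?thesis by (simp add: CB0)
    qed
    then have "(\<integral>\<^sup>+x. ?G (x(t0 := y)) \<partial>PiM I' (\<lambda>_. mu))
        = (\<integral>\<^sup>+x. indicator (Cset b t0) y * (\<Prod>t\<in>I'. indicator (CB b A y t) (x t)) \<partial>PiM I' (\<lambda>_. mu))"
      by simp
    also have "\<dots> = indicator (Cset b t0) y * (\<integral>\<^sup>+x. (\<Prod>t\<in>I'. indicator (CB b A y t) (x t)) \<partial>PiM I' (\<lambda>_. mu))"
      by (rule nn_integral_cmult) (intro borel_measurable_prod_ennreal, auto)
    also have "\<dots> = indicator (Cset b t0) y * (\<Prod>t\<in>I'. emeasure mu (CB b A y t))"
      using fI by (subst prod_ind_PiM) auto
    finally show ?thesis .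
  qed
  define K where "K = (\<Prod>t\<in>I'. if t \<in> A then ennreal (m - c n) else emeasure mu (CA b A t))"
  have s3: "AE y in mu. indicator (Cset b t0) y * (\<Prod>t\<in>I'. emeasure mu (CB b A y t)) \<le> indicator (Cset b t0) y * K"
    using AE_mu_Xbox
  proof (rule AE_mp, intro AE_I2 impI)
    fix y assume y: "y \<in> Xbox"
    show "indicator (Cset b t0) y * (\<Prod>t\<in>I'. emeasure mu (CB b A y t)) \<le> indicator (Cset b t0) y * K"
    proof (cases "y \<in> Cset b t0")
      case False then show ?thesis by simp
    next
      case True
      then have yX: "y \<notin> X (ph b t0)" using nb by (simp add: Cset_def)
      have p1: "ph b t0 \<noteq> 0"
      proof
        assume "ph b t0 = 0" then show False using yX y by (simp add: thr_set_def)
      qed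
      have p2: "ph b t0 < n" using ph_lt[OF v] t0L by (simp add: L_def)
      have "(\<Prod>t\<in>I'. emeasure mu (CB b A y t)) \<le> K"
        unfolding K_def
      proof (rule prod_mono_ennreal)
        fix t assume "t \<in> I'"
        show "emeasure mu (CB b A y t) \<le> (if t \<in> A then ennreal (m - c n) else emeasure mu (CA b A t))"
        proof (cases "t \<in> A")
          case True
          then show ?thesis using key_geom[OF y yX] p1 p2 by (simp add: CB_def m_def)
        next
          case False then show ?thesis by (simp add: CB_def)
        qed
      qed
      then show ?thesis by (intro mult_left_mono) auto
    qed
  qed
  have KK: "K = ennreal q ^ k * (\<Prod>t\<in>I'. emeasure mu (CA b A t))"
  proof -
    have "K = (\<Prod>t\<in>I'. (if t \<in> A then ennreal q else 1) * emeasure mu (CA b A t))"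
      unfolding K_def
    proof (intro prod.cong refl)
      fix t assume "t \<in> I'"
      show "(if t \<in> A then ennreal (m - c n) else emeasure mu (CA b A t)) = (if t \<in> A then ennreal q else 1) * emeasure mu (CA b A t)"
      proof (cases "t \<in> A")
        case True
        then have "emeasure mu (CA b A t) = ennreal m" by (simp add: CA_def mu_eqm m_def)
        then show ?thesis using True q0 qm by (simp add: ennreal_mult[symmetric] mpos less_imp_le)
      qed simp
    qed
    also have "\<dots> = (\<Prod>t\<in>I'. (if t \<in> A then ennreal q else 1)) * (\<Prod>t\<in>I'. emeasure mu (CA b A t))"
      by (rule prod.distrib)
    also have "(\<Prod>t\<in>I'. (if t \<in> A then ennreal q else 1)) = (\<Prod>t\<in>I' \<inter> A. ennreal q)"
      using fI by (rule prod.inter_restrict[symmetric])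
    also have "\<dots> = ennreal q ^ k" using AI cA by (simp add: Int_absorb1)
    finally show ?thesis .
  qed
  have FF: "FA b A = emeasure mu (Cset b t0) * (\<Prod>t\<in>I'. emeasure mu (CA b A t))"
    unfolding FA_def using t0J CA0 by (subst prod.remove[of "{..<length b}" t0]) (auto simp: J_def I'_def L_def)
  have "(\<integral>\<^sup>+w. ?G w \<partial>sample_space) \<le> (\<integral>\<^sup>+y. indicator (Cset b t0) y * K \<partial>mu)"
    unfolding s1 s2 by (rule nn_integral_mono_AE[OF s3])
  also have "\<dots> = emeasure mu (Cset b t0) * K"
    by (subst nn_integral_multc) auto
  also have "\<dots> = ennreal q ^ k * FA b A"
    unfolding KK FF by (simp add: ac_simps)
  finally show ?thesis by (simp add: L_def q_def m_def)
qed

end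

context thr begin

lemma int_LHS_b:
  assumes v: "valid b" and t0: "t0 \<in> Rej b"
  shows "(\<integral>\<^sup>+w. (if w \<in> Eb b \<and> zb b w = k \<and> ndom b t0 w then 1 else 0) \<partial>sample_space)
     \<le> ennreal (1 - c n / measure mu (X n)) ^ k * (\<Sum>A\<in>subsK b k. FA b A)"
proof -
  have "(\<integral>\<^sup>+w. (if w \<in> Eb b \<and> zb b w = k \<and> ndom b t0 w then 1 else 0) \<partial>sample_space)
      = (\<integral>\<^sup>+w. (\<Sum>A\<in>subsK b k. \<Prod>t<length b. indicator (CB b A (w t0) t) (w t)) \<partial>sample_space)"
    by (intro nn_integral_cong) (simp add: sum_CB[OF v t0])
  also have "\<dots> = (\<Sum>A\<in>subsK b k. \<integral>\<^sup>+w. (\<Prod>t<length b. indicator (CB b A (w t0) t) (w t)) \<partial>sample_space)"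
    by (rule nn_integral_sum) (unfold sample_space_def, rule meas_CB, auto)
  also have "\<dots> \<le> (\<Sum>A\<in>subsK b k. ennreal (1 - c n / measure mu (X n)) ^ k * FA b A)"
    by (intro sum_mono bound_A[OF v t0])
  also have "\<dots> = ennreal (1 - c n / measure mu (X n)) ^ k * (\<Sum>A\<in>subsK b k. FA b A)"
    by (simp add: sum_distrib_left)
  finally show ?thesis .
qed

definition pib :: "bool list \<Rightarrow> ennreal" where
  "pib b = (\<Prod>t\<in>Rej b. emeasure mu (Cset b t))"

definition Mprod :: ennreal where
  "Mprod = (\<Prod>j<n. emeasure mu (X j))"

definition hh :: "nat set \<Rightarrow> nat \<Rightarrow> ennreal" where
  "hh A' j = (if j \<in> A' then emeasure mu (X n) else emeasure mu (X j - X n))"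

definition Qk :: "nat \<Rightarrow> ennreal" where
  "Qk k = (\<Sum>A'\<in>{A'. A' \<subseteq> {..<n} \<and> card A' = k}. \<Prod>j<n. hh A' j)"

lemma split_L: "{..<length b} = Sel b \<union> Rej b" "Sel b \<inter> Rej b = {}"
  by (auto simp: Sel_def Rej_def)

lemma F1: assumes v: "valid b" shows "(\<Prod>t<length b. emeasure mu (Cset b t)) = pib b * Mprod"
proof -
  have "(\<Prod>t<length b. emeasure mu (Cset b t)) = (\<Prod>t\<in>Sel b. emeasure mu (Cset b t)) * (\<Prod>t\<in>Rej b. emeasure mu (Cset b t))"
    unfolding split_L(1) by (rule prod.union_disjoint) (auto simp: split_L(2))
  also have "(\<Prod>t\<in>Sel b. emeasure mu (Cset b t)) = (\<Prod>t\<in>Sel b. emeasure mu (X (ph b t)))"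
    by (intro prod.cong) (auto simp: Cset_def Sel_def)
  also have "\<dots> = Mprod"
    unfolding Mprod_def by (rule prod.reindex_bij_betw[OF ph_bij[OF v]])
  finally show ?thesis by (simp add: pib_def ac_simps)
qed

lemma F2: assumes v: "valid b" shows "(\<Sum>A\<in>subsK b k. FA b A) = pib b * Qk k"
proof -
  have inj: "inj_on (ph b) (Sel b)" using ph_bij[OF v] by (simp add: bij_betw_def)
  have FAe: "FA b A = pib b * (\<Prod>j<n. hh (ph b ` A) j)" if A: "A \<in> subsK b k" for A
  proof -
    have AS: "A \<subseteq> Sel b" using A by (simp add: subsK_def)
    have "FA b A = (\<Prod>t\<in>Sel b. emeasure mu (CA b A t)) * (\<Prod>t\<in>Rej b. emeasure mu (CA b A t))"
      unfolding FA_def split_L(1) by (rule prod.union_disjoint) (auto simp: split_L(2))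
    also have "(\<Prod>t\<in>Rej b. emeasure mu (CA b A t)) = pib b"
      unfolding pib_def using AS by (intro prod.cong) (auto simp: CA_def Sel_def Rej_def)
    also have "(\<Prod>t\<in>Sel b. emeasure mu (CA b A t)) = (\<Prod>t\<in>Sel b. hh (ph b ` A) (ph b t))"
    proof (intro prod.cong refl)
      fix t assume t: "t \<in> Sel b"
      have "(ph b t \<in> ph b ` A) = (t \<in> A)" using inj AS t by (auto dest: inj_onD)
      then show "emeasure mu (CA b A t) = hh (ph b ` A) (ph b t)" using t by (simp add: CA_def hh_def)
    qed
    also have "\<dots> = (\<Prod>j<n. hh (ph b ` A) j)"
      by (rule prod.reindex_bij_betw[OF ph_bij[OF v], where g="hh (ph b ` A)"])
    finally show ?thesis by (simp add: ac_simps)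
  qed
  have bij: "bij_betw (image (ph b)) (subsK b k) {A'. A' \<subseteq> {..<n} \<and> card A' = k}"
  proof (rule bij_betw_subset[OF bij_betw_Pow[OF ph_bij[OF v]]])
    show "subsK b k \<subseteq> Pow (Sel b)" by (auto simp: subsK_def)
    show "image (ph b) ` subsK b k = {A'. A' \<subseteq> {..<n} \<and> card A' = k}"
    proof (intro equalityI subsetI)
      fix A' assume "A' \<in> image (ph b) ` subsK b k"
      then obtain A where A: "A \<in> subsK b k" "A' = ph b ` A" by auto
      then have "card A' = k" using inj by (auto simp: subsK_def card_image inj_on_subset)
      moreover have "A' \<subseteq> {..<n}" using A ph_bij[OF v] by (auto simp: subsK_def bij_betw_def)
      ultimately show "A' \<in> {A'. A' \<subseteq> {..<n} \<and> card A' = k}" by simp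
    next
      fix A' assume A': "A' \<in> {A'. A' \<subseteq> {..<n} \<and> card A' = k}"
      then have "A' \<in> Pow {..<n}" by simp
      then have "A' \<in> image (ph b) ` Pow (Sel b)"
        using bij_betw_Pow[OF ph_bij[OF v]] by (simp add: bij_betw_def)
      then obtain A where A: "A \<subseteq> Sel b" "A' = ph b ` A" by auto
      then have "card A = k" using A' inj by (auto simp: card_image inj_on_subset)
      then show "A' \<in> image (ph b) ` subsK b k" using A by (auto simp: subsK_def)
    qed
  qed
  have "(\<Sum>A\<in>subsK b k. FA b A) = (\<Sum>A\<in>subsK b k. pib b * (\<Prod>j<n. hh (ph b ` A) j))"
    by (intro sum.cong refl FAe)
  also have "\<dots> = pib b * (\<Sum>A\<in>subsK b k. (\<Prod>j<n. hh (ph b ` A) j))"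
    by (simp add: sum_distrib_left)
  also have "(\<Sum>A\<in>subsK b k. (\<Prod>j<n. hh (ph b ` A) j)) = Qk k"
    unfolding Qk_def by (rule sum.reindex_bij_betw[OF bij, where g="\<lambda>A'. \<Prod>j<n. hh A' j"])
  finally show ?thesis .
qed

end

lemma thr_sets_mu[measurable]: "thr_set c i \<in> sets mu" by simp

abbreviation "PM \<equiv> PiM UNIV (\<lambda>_::nat. mu)"

lemma pred_mem: "(\<lambda>w. w t \<in> thr_set c i) \<in> measurable PM (count_space UNIV)"
  by measurable

lemma meas_nsel: "(\<lambda>w. nsel c w t) \<in> measurable PM (count_space UNIV)"
proof (induction t)
  case 0 then show ?case by simp
next
  case (Suc t)
  note [measurable] = Suc
  have p: "(\<lambda>w. w t \<in> thr_set c (nsel c w t)) \<in> measurable PM (count_space UNIV)"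
    by (rule measurable_compose_countable[where f="\<lambda>j w. w t \<in> thr_set c j"]) (rule pred_mem, rule Suc)
  note [measurable] = p
  show ?case by simp
qed

lemma meas_sel: "(\<lambda>w. selected c w t) \<in> measurable PM (count_space UNIV)"
  unfolding selected_def
  by (rule measurable_compose_countable[where f="\<lambda>j w. w t \<in> thr_set c j"]) (rule pred_mem, rule meas_nsel)

lemma meas_Tn: "(\<lambda>w. Tn c w n) \<in> measurable PM (count_space UNIV)"
  unfolding Tn_def
proof (rule measurable_Least)
  fix i
  note [measurable] = meas_nsel[of c i]
  show "(\<lambda>w. nsel c w i = n) \<in> measurable PM (count_space UNIV)" by measurable
qed

definition gS :: "(nat \<Rightarrow> real) \<Rightarrow> (nat \<Rightarrow> real \<times> real) \<Rightarrow> nat \<Rightarrow> (real \<times> real) set" where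
  "gS c w T = {w t | t. t < T \<and> selected c w t}"

lemma finite_gS: "finite (gS c w T)"
proof -
  have "gS c w T \<subseteq> w ` {..<T}" by (auto simp: gS_def)
  then show ?thesis by (rule finite_subset) auto
qed

lemma gS_Suc: "gS c w (Suc T) = gS c w T \<union> (if selected c w T then {w T} else {})"
  by (auto simp: gS_def less_Suc_eq)

lemma card_gS_Suc:
  "card (gS c w (Suc T) \<inter> Y) = card (gS c w T \<inter> Y)
     + (if selected c w T \<and> w T \<in> Y \<and> (\<forall>t<T. selected c w t \<longrightarrow> w t \<noteq> w T) then 1 else 0)"
proof (cases "selected c w T \<and> w T \<in> Y")
  case True
  have fin: "finite (gS c w T \<inter> Y)" using finite_gS by auto
  have eq: "gS c w (Suc T) \<inter> Y = insert (w T) (gS c w T \<inter> Y)" using True by (auto simp: gS_Suc)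
  have mem: "w T \<in> gS c w T \<inter> Y \<longleftrightarrow> \<not> (\<forall>t<T. selected c w t \<longrightarrow> w t \<noteq> w T)"
    using True by (auto simp: gS_def) (metis)
  show ?thesis using True fin mem unfolding eq by (auto simp: card_insert_if)
next
  case False
  then have "gS c w (Suc T) \<inter> Y = gS c w T \<inter> Y" by (auto simp: gS_Suc)
  then show ?thesis using False by auto
qed

lemma comp_borel: "(\<lambda>w. w t) \<in> borel_measurable PM"
proof -
  have "(\<lambda>w. w t) \<in> measurable PM mu" by (rule measurable_component_singleton) auto
  then show ?thesis by (simp add: measurable_cong_sets[OF refl sets_mu[symmetric]])
qed

lemma meas_eqw: "(\<lambda>w. w t \<noteq> w T) \<in> measurable PM (count_space UNIV)"
proof -
  have "{w \<in> space PM. w t = w T} \<in> sets PM"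
    by (rule measurable_equality_set[OF comp_borel comp_borel])
  then have "Measurable.pred PM (\<lambda>w. w t = w T)" by (simp add: Measurable.pred_def)
  then show ?thesis by measurable
qed

lemma meas_gcard:
  assumes Y: "Y \<in> sets borel"
  shows "(\<lambda>w. card (gS c w T \<inter> Y)) \<in> measurable PM (count_space UNIV)"
proof (induction T)
  case 0 then show ?case by (simp add: gS_def)
next
  case (Suc T)
  note [measurable] = Suc meas_sel meas_eqw
  have Ym[measurable]: "Y \<in> sets mu" using Y by simp
  show ?case unfolding card_gS_Suc by measurable
qed

lemma Sset_gS: "Sset c w n = gS c w (Tn c w n)"
  by (simp add: Sset_def gS_def)

lemma Bset_sets:
  assumes Y: "Y \<in> sets borel"
  shows "{w \<in> space sample_space. card (Sset c w n \<inter> Y) = k} \<in> sets sample_space"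
proof -
  have "(\<lambda>w. card (gS c w (Tn c w n) \<inter> Y)) \<in> measurable PM (count_space UNIV)"
    by (rule measurable_compose_countable[where f="\<lambda>T w. card (gS c w T \<inter> Y)", OF meas_gcard[OF Y] meas_Tn])
  then have "Measurable.pred PM (\<lambda>w. card (gS c w (Tn c w n) \<inter> Y) = k)" by measurable
  then show ?thesis unfolding sample_space_def Measurable.pred_def Sset_gS .
qed


lemma point_eval:
  fixes f :: "'a::countable \<Rightarrow> ennreal"
  assumes "\<And>b. b \<noteq> b0 \<Longrightarrow> f b = 0"
  shows "(\<integral>\<^sup>+b. f b \<partial>count_space UNIV) = f b0"
proof -
  have "(\<integral>\<^sup>+b. f b \<partial>count_space UNIV) = (\<integral>\<^sup>+b. f b0 * indicator {b0} b \<partial>count_space UNIV)"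
    using assms by (intro nn_integral_cong) (auto simp: indicator_def)
  also have "\<dots> = f b0" by (subst nn_integral_cmult_indicator) auto
  finally show ?thesis .
qed

lemma point_le:
  fixes f :: "'a::countable \<Rightarrow> ennreal"
  shows "f b0 \<le> (\<integral>\<^sup>+b. f b \<partial>count_space UNIV)"
proof -
  have "f b0 = (\<integral>\<^sup>+b. f b0 * indicator {b0} b \<partial>count_space UNIV)"
    by (subst nn_integral_cmult_indicator) auto
  also have "\<dots> \<le> (\<integral>\<^sup>+b. f b \<partial>count_space UNIV)"
    by (intro nn_integral_mono) (auto simp: indicator_def)
  finally show ?thesis .
qed

context thr begin

definition Good :: "(nat \<Rightarrow> real \<times> real) \<Rightarrow> bool" where
  "Good w \<longleftrightarrow> inj w \<and> (\<forall>t. w t \<in> Xbox) \<and> (\<exists>t. nsel c w t = n)"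

lemma AE_Good: "AE w in sample_space. Good w"
  unfolding Good_def using AE_inj AE_Xbox AE_reach by (auto elim: AE_mp)

lemma Good_pat: assumes "Good w" obtains b0 where "valid b0" "w \<in> Eb b0" "\<And>b. valid b \<Longrightarrow> w \<in> Eb b \<Longrightarrow> b = b0"
  using assms reach_pat pat_unique unfolding Good_def by metis

lemma zb_card: assumes "valid b" "w \<in> Eb b" "inj w" shows "card (Sset c w n \<inter> X n) = zb b w"
proof -
  have "Sset c w n \<inter> X n = w ` {s \<in> Sel b. w s \<in> X n}" using Sset_Eb[OF assms(1,2)] by auto
  then show ?thesis unfolding zb_def using assms(3) by (simp add: card_image inj_on_subset[of w UNIV])
qed

definition fa :: "nat \<Rightarrow> bool list \<Rightarrow> (nat \<Rightarrow> real \<times> real) \<Rightarrow> ennreal" where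
  "fa k b w = (if valid b then \<Sum>t0\<in>Rej b. (if w \<in> Eb b \<and> zb b w = k \<and> ndom b t0 w then 1 else 0) else 0)"

definition fb :: "bool list \<Rightarrow> (nat \<Rightarrow> real \<times> real) \<Rightarrow> ennreal" where
  "fb b w = (if valid b then of_nat (card (Rej b)) * indicator (Eb b) w else 0)"

definition fc :: "nat \<Rightarrow> bool list \<Rightarrow> (nat \<Rightarrow> real \<times> real) \<Rightarrow> ennreal" where
  "fc k b w = (if valid b then (if w \<in> Eb b \<and> zb b w = k then 1 else 0) else 0)"

definition fd :: "bool list \<Rightarrow> (nat \<Rightarrow> real \<times> real) \<Rightarrow> ennreal" where
  "fd b w = (if valid b then indicator (Eb b) w else 0)"

lemma pw_a:
  assumes G: "Good w"
  shows "indicator {w. (\<exists>r \<in> Rset c w n. r \<notin> DS (Sset c w n \<inter> X n)) \<and> card (Sset c w n \<inter> X n) = k} w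
     \<le> (\<integral>\<^sup>+b. fa k b w \<partial>count_space UNIV)"
proof (cases "(\<exists>r \<in> Rset c w n. r \<notin> DS (Sset c w n \<inter> X n)) \<and> card (Sset c w n \<inter> X n) = k")
  case False then show ?thesis by simp
next
  case True
  obtain b0 where b0: "valid b0" "w \<in> Eb b0" using Good_pat[OF G] by metis
  have inj: "inj w" and box: "\<And>t. w t \<in> Xbox" using G by (auto simp: Good_def)
  from True obtain r where r: "r \<in> Rset c w n" "r \<notin> DS (Sset c w n \<inter> X n)" by auto
  then obtain t0 where t0: "t0 \<in> Rej b0" "r = w t0" using Rset_Eb[OF b0 inj] by auto
  have zk: "zb b0 w = k" using True zb_card[OF b0 inj] by simp
  have nd: "ndom b0 t0 w"
    unfolding ndom_def
  proof (intro ballI impI notI)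
    fix s assume s: "s \<in> Sel b0" "w s \<in> X n" and p: "prec (w t0) (w s)"
    have "w s \<in> Sset c w n \<inter> X n" using s Sset_Eb[OF b0] by auto
    moreover have "w t0 \<in> Dn (w s)" using p box by (simp add: Dn_def)
    ultimately have "r \<in> DS (Sset c w n \<inter> X n)" using t0 by (auto simp: DS_def)
    then show False using r by simp
  qed
  have "1 \<le> (\<Sum>t\<in>Rej b0. (if w \<in> Eb b0 \<and> zb b0 w = k \<and> ndom b0 t w then 1 else 0) :: ennreal)"
    using member_le_sum[of t0 "Rej b0" "\<lambda>t. (if w \<in> Eb b0 \<and> zb b0 w = k \<and> ndom b0 t w then 1 else 0) :: ennreal"]
      t0 b0 zk nd by simp
  also have "\<dots> = fa k b0 w" using b0 by (simp add: fa_def)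
  also have "\<dots> \<le> (\<integral>\<^sup>+b. fa k b w \<partial>count_space UNIV)" by (rule point_le)
  finally show ?thesis using True by simp
qed

lemma pw_b:
  assumes G: "Good w"
  shows "(\<integral>\<^sup>+b. fb b w \<partial>count_space UNIV) \<le> of_nat (card (Rset c w n))"
proof -
  obtain b0 where b0: "valid b0" "w \<in> Eb b0" and u: "\<And>b. valid b \<Longrightarrow> w \<in> Eb b \<Longrightarrow> b = b0"
    using Good_pat[OF G] by metis
  have inj: "inj w" using G by (simp add: Good_def)
  have "(\<integral>\<^sup>+b. fb b w \<partial>count_space UNIV) = fb b0 w"
    by (rule point_eval) (auto simp: fb_def indicator_def dest: u)
  also have "\<dots> = of_nat (card (Rej b0))" using b0 by (simp add: fb_def)
  also have "card (Rej b0) = card (Rset c w n)"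
    using Rset_Eb[OF b0 inj] inj by (simp add: card_image inj_on_subset[of w UNIV])
  finally show ?thesis by simp
qed

lemma pw_c:
  assumes G: "Good w"
  shows "(\<integral>\<^sup>+b. fc k b w \<partial>count_space UNIV) \<le> indicator {w. card (Sset c w n \<inter> X n) = k} w"
proof -
  obtain b0 where b0: "valid b0" "w \<in> Eb b0" and u: "\<And>b. valid b \<Longrightarrow> w \<in> Eb b \<Longrightarrow> b = b0"
    using Good_pat[OF G] by metis
  have inj: "inj w" using G by (simp add: Good_def)
  have "(\<integral>\<^sup>+b. fc k b w \<partial>count_space UNIV) = fc k b0 w"
    by (rule point_eval) (auto simp: fc_def indicator_def dest: u)
  then show ?thesis using b0 zb_card[OF b0 inj] by (simp add: fc_def indicator_def)
qed

lemma pw_d: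
  assumes G: "Good w"
  shows "1 \<le> (\<integral>\<^sup>+b. fd b w \<partial>count_space UNIV)"
proof -
  obtain b0 where b0: "valid b0" "w \<in> Eb b0" using Good_pat[OF G] by metis
  have "1 = fd b0 w" using b0 by (simp add: fd_def)
  also have "\<dots> \<le> (\<integral>\<^sup>+b. fd b w \<partial>count_space UNIV)" by (rule point_le)
  finally show ?thesis .
qed

end

context thr begin

lemma meas_ind_k:
  assumes v: "valid b" and t0: "t0 \<in> Rej b"
  shows "(\<lambda>w. (if w \<in> Eb b \<and> zb b w = k \<and> ndom b t0 w then 1 else 0) :: ennreal) \<in> borel_measurable sample_space"
proof -
  have "(\<lambda>w. (if w \<in> Eb b \<and> zb b w = k \<and> ndom b t0 w then 1 else 0) :: ennreal)
      = (\<lambda>w. \<Sum>A\<in>subsK b k. \<Prod>t<length b. indicator (CB b A (w t0) t) (w t))"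
    by (simp add: sum_CB[OF v t0])
  also have "\<dots> \<in> borel_measurable sample_space"
    unfolding sample_space_def by (intro borel_measurable_sum meas_CB) auto
  finally show ?thesis .
qed

lemma meas_fa: "fa k b \<in> borel_measurable sample_space"
proof (cases "valid b")
  case True
  then have "fa k b = (\<lambda>w. \<Sum>t0\<in>Rej b. (if w \<in> Eb b \<and> zb b w = k \<and> ndom b t0 w then 1 else 0))"
    by (simp add: fa_def[abs_def])
  also have "\<dots> \<in> borel_measurable sample_space"
    using True by (intro borel_measurable_sum meas_ind_k)
  finally show ?thesis .
qed (simp add: fa_def[abs_def])

lemma ind_Eb_eq: "indicator (Eb b) w = (\<Prod>t<length b. indicator (Cset b t) (w t) :: ennreal)"
  by (auto simp: prod_ind_iff Eb_def indicator_def)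

lemma meas_Eb: "(\<lambda>w. indicator (Eb b) w :: ennreal) \<in> borel_measurable sample_space"
  unfolding ind_Eb_eq by (rule meas_prod_ind) simp

lemma meas_fb: "fb b \<in> borel_measurable sample_space"
  unfolding fb_def[abs_def] using meas_Eb by (cases "valid b") auto

lemma meas_fd: "fd b \<in> borel_measurable sample_space"
  unfolding fd_def[abs_def] using meas_Eb by (cases "valid b") auto

lemma meas_fc: "fc k b \<in> borel_measurable sample_space"
proof (cases "valid b")
  case True
  then have "fc k b = (\<lambda>w. \<Sum>A\<in>subsK b k. \<Prod>t<length b. indicator (CA b A t) (w t))"
    by (simp add: fc_def[abs_def] sum_CA)
  also have "\<dots> \<in> borel_measurable sample_space"
    by (intro borel_measurable_sum meas_prod_ind) simp
  finally show ?thesis .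
qed (simp add: fc_def[abs_def])

abbreviation "qk k \<equiv> ennreal (1 - c n / measure mu (X n)) ^ k"

lemma IA: "(\<integral>\<^sup>+w. fa k b w \<partial>sample_space)
    \<le> (if valid b then of_nat (card (Rej b)) * pib b else 0) * (qk k * Qk k)"
proof (cases "valid b")
  case True
  have "(\<integral>\<^sup>+w. fa k b w \<partial>sample_space)
      = (\<integral>\<^sup>+w. (\<Sum>t0\<in>Rej b. (if w \<in> Eb b \<and> zb b w = k \<and> ndom b t0 w then 1 else 0)) \<partial>sample_space)"
    using True by (simp add: fa_def)
  also have "\<dots> = (\<Sum>t0\<in>Rej b. \<integral>\<^sup>+w. (if w \<in> Eb b \<and> zb b w = k \<and> ndom b t0 w then 1 else 0) \<partial>sample_space)"
    using True by (intro nn_integral_sum meas_ind_k)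
  also have "\<dots> \<le> (\<Sum>t0\<in>Rej b. qk k * (pib b * Qk k))"
    using True by (intro sum_mono) (simp add: int_LHS_b F2[symmetric])
  also have "\<dots> = (if valid b then of_nat (card (Rej b)) * pib b else 0) * (qk k * Qk k)"
    using True by (simp add: ac_simps)
  finally show ?thesis .
qed (simp add: fa_def)

lemma IB: "(\<integral>\<^sup>+w. fb b w \<partial>sample_space) = (if valid b then of_nat (card (Rej b)) * pib b else 0) * Mprod"
proof (cases "valid b")
  case True
  have "(\<integral>\<^sup>+w. fb b w \<partial>sample_space) = of_nat (card (Rej b)) * (\<integral>\<^sup>+w. indicator (Eb b) w \<partial>sample_space)"
    using True unfolding fb_def by (simp add: nn_integral_cmult meas_Eb)
  also have "\<dots> = of_nat (card (Rej b)) * (pib b * Mprod)" by (simp add: int_Eb F1[OF True])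
  finally show ?thesis using True by (simp add: ac_simps)
qed (simp add: fb_def)

lemma IC: "(\<integral>\<^sup>+w. fc k b w \<partial>sample_space) = (if valid b then pib b else 0) * Qk k"
proof (cases "valid b")
  case True
  have "(\<integral>\<^sup>+w. fc k b w \<partial>sample_space) = (\<Sum>A\<in>subsK b k. FA b A)"
    using True unfolding fc_def by (simp add: int_Ebk)
  then show ?thesis using True by (simp add: F2)
qed (simp add: fc_def)

lemma ID: "(\<integral>\<^sup>+w. fd b w \<partial>sample_space) = (if valid b then pib b else 0) * Mprod"
proof (cases "valid b")
  case True
  then show ?thesis unfolding fd_def by (simp add: int_Eb F1)
qed (simp add: fd_def)

end

context thr begin

lemma swap_cs:
  assumes "\<And>b. f b \<in> borel_measurable sample_space"
  shows "(\<integral>\<^sup>+w. (\<integral>\<^sup>+b. f b w \<partial>count_space (UNIV :: bool list set)) \<partial>sample_space)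
       = (\<integral>\<^sup>+b. (\<integral>\<^sup>+w. f b w \<partial>sample_space) \<partial>count_space UNIV)"
  by (rule nn_integral_count_space_nn_integral) (auto intro: assms)

lemma qk_le: "qk k \<le> ennreal (exp (- (real k * c n / measure mu (X n))))"
proof -
  define p where "p = c n / measure mu (X n)"
  have mpos: "0 < measure mu (X n)" by (rule m_pos)
  have cm: "c n \<le> measure mu (X n)" using m_ge[of n] n1 by simp
  have p0: "0 \<le> 1 - p" using cm mpos by (simp add: p_def field_simps)
  have "(1 - p) ^ k \<le> exp (- p) ^ k"
    using p0 exp_ge_add_one_self[of "- p"] by (intro power_mono) auto
  also have "\<dots> = exp (- (real k * c n / measure mu (X n)))"
    by (simp add: p_def exp_of_nat_mult[symmetric])
  finally have "(1 - p) ^ k \<le> exp (- (real k * c n / measure mu (X n)))" .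
  then have "ennreal ((1 - p) ^ k) \<le> ennreal (exp (- (real k * c n / measure mu (X n))))"
    by (rule ennreal_leI)
  moreover have "ennreal (1 - p) ^ k = ennreal ((1 - p) ^ k)" by (rule ennreal_power[OF p0])
  ultimately show ?thesis by (simp add: p_def)
qed

theorem main:
  "emeasure sample_space
     {w \<in> space sample_space.
        (\<exists>r \<in> Rset c w n. r \<notin> DS (Sset c w n \<inter> thr_set c n))
        \<and> card (Sset c w n \<inter> thr_set c n) = k}
   \<le> ennreal (exp (- (real k * c n / measure mu (thr_set c n))))
     * (\<integral>\<^sup>+ w. of_nat (card (Rset c w n)) \<partial>sample_space)
     * emeasure sample_space {w \<in> space sample_space. card (Sset c w n \<inter> thr_set c n) = k}"
proof -
  let ?cs = "count_space (UNIV :: bool list set)"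
  define g1 where "g1 b = (if valid b then of_nat (card (Rej b)) * pib b else 0)" for b
  define g0 where "g0 b = (if valid b then pib b else 0)" for b
  define S1 where "S1 = (\<integral>\<^sup>+b. g1 b \<partial>?cs)"
  define S0 where "S0 = (\<integral>\<^sup>+b. g0 b \<partial>?cs)"
  define LS where "LS = {w. (\<exists>r \<in> Rset c w n. r \<notin> DS (Sset c w n \<inter> X n)) \<and> card (Sset c w n \<inter> X n) = k}"
  define BS where "BS = {w. card (Sset c w n \<inter> X n) = k}"
  define ER where "ER = (\<integral>\<^sup>+ w. of_nat (card (Rset c w n)) \<partial>sample_space)"
  have L1: "emeasure sample_space LS \<le> S1 * (qk k * Qk k)"
  proof -
    have "emeasure sample_space LS \<le> (\<integral>\<^sup>+w. indicator LS w \<partial>sample_space)"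
    proof (cases "LS \<in> sets sample_space")
      case True then show ?thesis by simp
    next
      case False then show ?thesis by (simp add: emeasure_notin_sets)
    qed
    also have "\<dots> \<le> (\<integral>\<^sup>+w. (\<integral>\<^sup>+b. fa k b w \<partial>?cs) \<partial>sample_space)"
      using AE_Good by (intro nn_integral_mono_AE) (auto elim!: AE_mp intro: pw_a simp: LS_def)
    also have "\<dots> = (\<integral>\<^sup>+b. (\<integral>\<^sup>+w. fa k b w \<partial>sample_space) \<partial>?cs)"
      by (rule swap_cs) (rule meas_fa)
    also have "\<dots> \<le> (\<integral>\<^sup>+b. g1 b * (qk k * Qk k) \<partial>?cs)"
      by (intro nn_integral_mono) (simp add: IA g1_def)
    also have "\<dots> = S1 * (qk k * Qk k)"
      unfolding S1_def by (rule nn_integral_multc) simp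
    finally show ?thesis .
  qed
  have L2: "S1 * Mprod \<le> ER"
  proof -
    have "S1 * Mprod = (\<integral>\<^sup>+b. g1 b * Mprod \<partial>?cs)"
      unfolding S1_def by (rule nn_integral_multc[symmetric]) simp
    also have "\<dots> = (\<integral>\<^sup>+b. (\<integral>\<^sup>+w. fb b w \<partial>sample_space) \<partial>?cs)"
      by (simp add: IB g1_def)
    also have "\<dots> = (\<integral>\<^sup>+w. (\<integral>\<^sup>+b. fb b w \<partial>?cs) \<partial>sample_space)"
      by (rule swap_cs[symmetric]) (rule meas_fb)
    also have "\<dots> \<le> ER"
      unfolding ER_def using AE_Good by (intro nn_integral_mono_AE) (auto elim!: AE_mp intro: pw_b)
    finally show ?thesis .
  qed
  have L3: "S0 * Qk k \<le> emeasure sample_space BS"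
  proof -
    have BSs: "BS \<in> sets sample_space" using Bset_sets[of "X n" c n k] by (simp add: BS_def)
    have "S0 * Qk k = (\<integral>\<^sup>+b. g0 b * Qk k \<partial>?cs)"
      unfolding S0_def by (rule nn_integral_multc[symmetric]) simp
    also have "\<dots> = (\<integral>\<^sup>+b. (\<integral>\<^sup>+w. fc k b w \<partial>sample_space) \<partial>?cs)"
      by (simp add: IC g0_def)
    also have "\<dots> = (\<integral>\<^sup>+w. (\<integral>\<^sup>+b. fc k b w \<partial>?cs) \<partial>sample_space)"
      by (rule swap_cs[symmetric]) (rule meas_fc)
    also have "\<dots> \<le> (\<integral>\<^sup>+w. indicator BS w \<partial>sample_space)"
      using AE_Good by (intro nn_integral_mono_AE) (auto elim!: AE_mp intro: pw_c simp: BS_def)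
    also have "\<dots> = emeasure sample_space BS" using BSs by simp
    finally show ?thesis .
  qed
  have L4: "1 \<le> S0 * Mprod"
  proof -
    have "(1::ennreal) = (\<integral>\<^sup>+w. 1 \<partial>sample_space)"
      using prob_space.emeasure_space_1[OF prob_SS] by simp
    also have "\<dots> \<le> (\<integral>\<^sup>+w. (\<integral>\<^sup>+b. fd b w \<partial>?cs) \<partial>sample_space)"
      using AE_Good by (intro nn_integral_mono_AE) (auto elim!: AE_mp intro: pw_d)
    also have "\<dots> = (\<integral>\<^sup>+b. (\<integral>\<^sup>+w. fd b w \<partial>sample_space) \<partial>?cs)"
      by (rule swap_cs) (rule meas_fd)
    also have "\<dots> = (\<integral>\<^sup>+b. g0 b * Mprod \<partial>?cs)"
      by (simp add: ID g0_def)
    also have "\<dots> = S0 * Mprod"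
      unfolding S0_def by (rule nn_integral_multc) simp
    finally show ?thesis .
  qed
  define E where "E = ennreal (exp (- (real k * c n / measure mu (X n))))"
  have "emeasure sample_space LS \<le> S1 * (qk k * Qk k)" by (rule L1)
  also have "\<dots> \<le> S1 * (E * Qk k)"
    using qk_le by (intro mult_left_mono mult_right_mono) (auto simp: E_def)
  also have "\<dots> = E * Qk k * S1 * 1" by (simp add: ac_simps)
  also have "\<dots> \<le> E * Qk k * S1 * (S0 * Mprod)" by (intro mult_left_mono L4) simp
  also have "\<dots> = E * (S1 * Mprod) * (S0 * Qk k)" by (simp add: ac_simps)
  also have "\<dots> \<le> E * ER * emeasure sample_space BS"
    by (intro mult_mono L2 L3) auto
  finally show ?thesis by (simp add: LS_def BS_def E_def ER_def)
qed

end


theorem lemma6: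
  fixes c :: "nat \<Rightarrow> real" and n k :: nat
  assumes "\<forall>i\<ge>1. 0 < c i \<and> c i \<le> 1"
    and "\<forall>i j. 1 \<le> i \<longrightarrow> i \<le> j \<longrightarrow> c j \<le> c i"
    and "1 \<le> n"
  shows "emeasure sample_space
           {w \<in> space sample_space.
              (\<exists>r \<in> Rset c w n. r \<notin> DS (Sset c w n \<inter> thr_set c n))
              \<and> card (Sset c w n \<inter> thr_set c n) = k}
         \<le> ennreal (exp (- (real k * c n / measure mu (thr_set c n))))
           * (\<integral>\<^sup>+ w. of_nat (card (Rset c w n)) \<partial>sample_space)
           * emeasure sample_space {w \<in> space sample_space. card (Sset c w n \<inter> thr_set c n) = k}"
proof -
  interpret thr c n using assms by (unfold_locales) auto
  show ?thesis by (rule main)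
qed

end
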